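(* Suppose $d\ge9$ and $k$ is an integer with $\frac d2+1<k\le\frac{2d}3$. If $x\ge\frac{5k-2d}{d-k}$, then $(x+1)f'(x)<k\,f(x)$.
   Context: $f(x)=\binom dk^{-1}\sum_{i=0}^{d-k}\binom ki\binom{d-k}{i}x^{k-i}$ (the probability generating function of the hypergeometric distribution with parameters $(d,k,k)$). *)

theory Defs
  imports "HOL-Analysis.Analysis"
begin

definition hyp_pgf :: "nat \<Rightarrow> nat \<Rightarrow> real \<Rightarrow> real" where
  "hyp_pgf d k x = (\<Sum>i=0..d-k. real (k choose i) * real ((d-k) choose i) * x ^ (k-i))
                    / real (d choose k)"

end

theory Submission
  imports Defs
begin


definition w :: "nat \<Rightarrow> nat \<Rightarrow> real \<Rightarrow> nat \<Rightarrow> real" where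
  "w k m x i = real (k choose i) * real (m choose i) * x ^ (m - i)"
definition S0 where "S0 k m x = (\<Sum>i=0..m. w k m x i)"
definition S1 where "S1 k m x = (\<Sum>i=0..m. real i * w k m x i)"

lemma binom_step: "real (Suc j) * real (n choose Suc j) = real (n - j) * real (n choose j)"
proof -
  have "Suc j * (n choose Suc j) = n * ((n - 1) choose j)"
    using times_binomial_minus1_eq[of "Suc j" n] by simp
  also have "\<dots> = (n - j) * (n choose j)" using binomial_absorb_comp[of n j] by simp
  finally show ?thesis by (metis of_nat_mult)
qed

lemma w_nonneg: "0 \<le> x \<Longrightarrow> 0 \<le> w k m x i"
  unfolding w_def by simp

lemma S0_pos: assumes "0 < x" shows "0 < S0 k m x"
  unfolding S0_def
proof (rule sum_pos2[of _ 0])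
  show "0 < w k m x 0" using assms by (simp add: w_def)
qed (use assms w_nonneg in auto)

lemma S1_pos: assumes "0 < x" "1 \<le> m" "1 \<le> k" shows "0 < S1 k m x"
  unfolding S1_def
proof (rule sum_pos2[of _ 1])
  show "0 < real 1 * w k m x 1" using assms by (simp add: w_def)
qed (use assms w_nonneg in auto)

lemma S1_id: "x * S1 k m x = (\<Sum>i=0..m. w k m x i * (real (k-i) * real (m-i) / real (Suc i)))"
proof (cases m)
  case 0
  then show ?thesis by (simp add: S1_def)
next
  case (Suc n)
  have L: "S1 k m x = (\<Sum>i=0..n. real (Suc i) * w k m x (Suc i))"
    unfolding S1_def Suc sum.atLeast0_atMost_Suc_shift by simp
  have R: "(\<Sum>i=0..m. w k m x i * (real (k-i) * real (m-i) / real (Suc i)))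
      = (\<Sum>i=0..n. w k m x i * (real (k-i) * real (m-i) / real (Suc i)))"
    unfolding Suc sum.atLeast0_atMost_Suc by simp
  have T: "x * (real (Suc i) * w k m x (Suc i)) = w k m x i * (real (k-i) * real (m-i) / real (Suc i))"
    if "i \<le> n" for i
  proof -
    have b1: "real (Suc i) * real (k choose Suc i) = real (k - i) * real (k choose i)" by (rule binom_step)
    have b2: "real (Suc i) * real (m choose Suc i) = real (m - i) * real (m choose i)" by (rule binom_step)
    have p: "x ^ (m - i) = x * x ^ (m - Suc i)" using that Suc
      by (metis Suc_diff_le diff_Suc_Suc power_Suc)
    have "real (Suc i) * (x * (real (Suc i) * w k m x (Suc i))) =
          x * x ^ (m - Suc i) * ((real (Suc i) * real (k choose Suc i)) * (real (Suc i) * real (m choose Suc i)))"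
      unfolding w_def by (simp add: algebra_simps)
    also have "\<dots> = real (Suc i) * (w k m x i * (real (k-i) * real (m-i) / real (Suc i)))"
      unfolding b1 b2 w_def p by (simp add: field_simps)
    finally show ?thesis by (metis mult_left_cancel of_nat_0_eq_iff nat.distinct(1))
  qed
  show ?thesis unfolding L R sum_distrib_left by (rule sum.cong[OF refl], rule T) auto
qed

lemma tangent: fixes u v :: real assumes "0 < u" "0 < v" shows "(2 * v - u)/v^2 \<le> 1/u"
proof -
  have "1/u - (2 * v - u)/v^2 = (v-u)^2/(u * v^2)" using assms by (simp add: field_simps power2_eq_square)
  moreover have "(v-u)^2/(u * v^2) \<ge> 0" using assms by simp
  ultimately show ?thesis by simp
qed

lemma jensen_case:
  assumes m3: "3 \<le> m" and mk: "m < k" and x: "0 < x"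
    and cond: "2 * real k < (real m - 1) * (x + 1)"
  shows "real k * S0 k m x < (x + 1) * S1 k m x"
proof (rule ccontr)
  assume neg: "\<not> real k * S0 k m x < (x + 1) * S1 k m x"
  define A where "A = S0 k m x"
  define B where "B = S1 k m x"
  have A: "0 < A" unfolding A_def using S0_pos x by blast
  have B: "0 < B" unfolding B_def using S1_pos[of x m k] x m3 mk by auto
  define v where "v = (A + B) / A"
  have v: "0 < v" using A B by (simp add: v_def)
  define K where "K = real k + 1"
  define M where "M = real m + 1"
  define \<alpha> where "\<alpha> = K * M * (2 * v - 1) / v^2 - (K + M) + 1"
  define \<beta> where "\<beta> = 1 - K * M / v^2"
  have phi: "real (k-i) * real (m-i) / real (Suc i) \<ge> \<alpha> + \<beta> * real i" if "i \<le> m" for i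
  proof -
    define u where "u = real i + 1"
    have u: "0 < u" by (simp add: u_def)
    have e1: "real (k-i) * real (m-i) / real (Suc i) = K * M / u - (K + M) + u"
      using that mk u by (simp add: u_def K_def M_def of_nat_diff field_simps)
    have e2: "\<alpha> + \<beta> * real i = K * M * ((2 * v - u) / v^2) - (K + M) + u"
      unfolding \<alpha>_def \<beta>_def u_def using v by (simp add: field_simps)
    have "K * M * ((2 * v - u) / v^2) \<le> K * M * (1 / u)"
      using tangent[OF u v] by (intro mult_left_mono) (auto simp: K_def M_def)
    then show ?thesis unfolding e1 e2 by simp
  qed
  have "x * B \<ge> (\<Sum>i=0..m. w k m x i * (\<alpha> + \<beta> * real i))"
    unfolding B_def S1_id
  proof (rule sum_mono)
    fix i assume "i \<in> {0..m}"
    then show "w k m x i * (\<alpha> + \<beta> * real i) \<le> w k m x i * (real (k-i) * real (m-i) / real (Suc i))"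
      using x by (intro mult_left_mono phi w_nonneg) auto
  qed
  also have "(\<Sum>i=0..m. w k m x i * (\<alpha> + \<beta> * real i)) = \<alpha> * A + \<beta> * B"
    unfolding A_def B_def S0_def S1_def
    by (simp add: sum.distrib sum_distrib_left algebra_simps)
  finally have main: "\<alpha> * A + \<beta> * B \<le> x * B" .
  define \<mu> where "\<mu> = B / A"
  have mu: "0 < \<mu>" using A B by (simp add: \<mu>_def)
  have vmu: "v = \<mu> + 1" using A by (simp add: v_def \<mu>_def field_simps)
  have "\<alpha> + \<beta> * \<mu> \<le> x * \<mu>"
  proof -
    have e1: "\<alpha> + \<beta> * \<mu> = (\<alpha> * A + \<beta> * B) / A" using A by (simp add: \<mu>_def field_simps)
    have e2: "x * \<mu> = (x * B) / A" by (simp add: \<mu>_def)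
    show ?thesis unfolding e1 e2 using main A by (intro divide_right_mono) auto
  qed
  moreover have "\<alpha> + \<beta> * \<mu> = K * M / v - (K + M) + v"
  proof -
    have mv: "\<mu> = v - 1" using vmu by simp
    show ?thesis unfolding \<alpha>_def \<beta>_def mv using v by (simp add: field_simps power2_eq_square)
  qed
  ultimately have "K * M / v - (K + M) + v \<le> x * \<mu>" by simp
  then have "K * M - (K + M) * v + v * v \<le> x * \<mu> * v"
    using v by (simp add: field_simps)
  then have key: "(real k - \<mu>) * (real m - \<mu>) \<le> x * \<mu> * (\<mu> + 1)"
    unfolding K_def M_def vmu by (simp add: algebra_simps)
  define t where "t = real k / (x + 1)"
  have mut: "\<mu> \<le> t" using neg A x unfolding t_def \<mu>_def A_def[symmetric] B_def[symmetric]
    by (simp add: field_simps)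
  have kt: "real k - t = x * t" using x by (simp add: t_def field_simps)
  have t2: "2 * t < real m - 1" using cond x by (simp add: t_def field_simps)
  have s1: "x * \<mu> \<le> real k - \<mu>" using kt mut x
    by (smt (verit) mult_left_mono)
  have s2: "\<mu> + 1 < real m - \<mu>" using t2 mut by linarith
  have "x * \<mu> * (\<mu> + 1) < x * \<mu> * (real m - \<mu>)"
    using s2 x mu by simp
  also have "\<dots> \<le> (real k - \<mu>) * (real m - \<mu>)"
    using s1 s2 mu by (intro mult_right_mono) auto
  finally show False using key by simp
qed


lemma deriv_hyp: assumes "k \<le> d" shows
  "deriv (hyp_pgf d k) x = (\<Sum>i=0..d-k. real (k choose i) * real ((d-k) choose i) * (real (k-i) * x ^ (k-i-1))) / real (d choose k)"
proof -
  have "(hyp_pgf d k has_real_derivative (\<Sum>i=0..d-k. real (k choose i) * real ((d-k) choose i) * (real (k-i) * x ^ (k-i-1))) / real (d choose k)) (at x)"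
    unfolding hyp_pgf_def[abs_def]
    apply (rule derivative_eq_intros refl)+
    using assms by (auto intro!: sum.cong)
  then show ?thesis by (rule DERIV_imp_deriv)
qed

lemma reduce:
  assumes kd: "k \<le> d" and mk: "d - k < k" and x: "0 < x"
    and main: "real k * S0 k (d-k) x < (x+1) * S1 k (d-k) x"
  shows "(x + 1) * deriv (hyp_pgf d k) x < real k * hyp_pgf d k x"
proof -
  define m where "m = d - k"
  have mk': "m < k" using mk by (simp add: m_def)
  define C where "C = real (d choose k)"
  have C: "0 < C" using kd by (simp add: C_def)
  define p where "p = x ^ (k - m - 1)"
  have p: "0 < p" using x by (simp add: p_def)
  have f: "hyp_pgf d k x = x * p * S0 k m x / C"
  proof -
    have "(\<Sum>i=0..m. real (k choose i) * real (m choose i) * x ^ (k-i)) = x * p * S0 k m x"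
      unfolding S0_def sum_distrib_left
    proof (rule sum.cong[OF refl])
      fix i assume "i \<in> {0..m}"
      then have "k - i = Suc (k - m - 1) + (m - i)" using mk' by auto
      then have "x ^ (k - i) = x ^ Suc (k - m - 1) * x ^ (m - i)" by (metis power_add)
      then have "x ^ (k - i) = x * p * x ^ (m - i)" by (simp add: p_def)
      then show "real (k choose i) * real (m choose i) * x ^ (k-i) = x * p * w k m x i"
        by (simp add: w_def)
    qed
    then show ?thesis unfolding hyp_pgf_def C_def m_def by simp
  qed
  have f': "deriv (hyp_pgf d k) x = p * (real k * S0 k m x - S1 k m x) / C"
  proof -
    have "(\<Sum>i=0..m. real (k choose i) * real (m choose i) * (real (k-i) * x ^ (k-i-1)))
        = p * (\<Sum>i=0..m. (real k - real i) * w k m x i)"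
      unfolding sum_distrib_left
    proof (rule sum.cong[OF refl])
      fix i assume "i \<in> {0..m}"
      then have i: "i \<le> m" by simp
      then have "k - i - 1 = (k - m - 1) + (m - i)" using mk' by auto
      then have "x ^ (k - i - 1) = p * x ^ (m - i)" unfolding p_def by (metis power_add)
      moreover have "real (k - i) = real k - real i" using i mk' by (simp add: of_nat_diff)
      ultimately show "real (k choose i) * real (m choose i) * (real (k-i) * x ^ (k-i-1)) = p * ((real k - real i) * w k m x i)"
        by (simp add: w_def)
    qed
    also have "(\<Sum>i=0..m. (real k - real i) * w k m x i) = real k * S0 k m x - S1 k m x"
      unfolding S0_def S1_def by (simp add: left_diff_distrib sum_subtractf sum_distrib_left)
    finally show ?thesis using deriv_hyp[OF kd, of x] unfolding C_def m_def by simp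
  qed
  have "(x + 1) * (p * (real k * S0 k m x - S1 k m x)) < real k * (x * p * S0 k m x)"
  proof -
    have "real k * (x * p * S0 k m x) - (x + 1) * (p * (real k * S0 k m x - S1 k m x))
          = p * ((x+1) * S1 k m x - real k * S0 k m x)" by (simp add: algebra_simps)
    moreover have "0 < p * ((x+1) * S1 k m x - real k * S0 k m x)"
      using p main unfolding m_def by simp
    ultimately show ?thesis by linarith
  qed
  then have "(x + 1) * (p * (real k * S0 k m x - S1 k m x)) / C < real k * (x * p * S0 k m x) / C"
    using C by (rule divide_strict_right_mono)
  then show ?thesis unfolding f f' by simp
qed

lemma sum3: "(\<Sum>i=0..(3::nat). f i) = f 0 + f 1 + f 2 + f 3"
  by (simp add: eval_nat_numeral sum.atLeast0_atMost_Suc)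

lemma sum4: "(\<Sum>i=0..(4::nat). f i) = f 0 + f 1 + f 2 + f 3 + f 4"
  by (simp add: eval_nat_numeral sum.atLeast0_atMost_Suc)

lemma sum5: "(\<Sum>i=0..(5::nat). f i) = f 0 + f 1 + f 2 + f 3 + f 4 + f 5"
  by (simp add: eval_nat_numeral sum.atLeast0_atMost_Suc)

lemma sum6: "(\<Sum>i=0..(6::nat). f i) = f 0 + f 1 + f 2 + f 3 + f 4 + f 5 + f 6"
  by (simp add: eval_nat_numeral sum.atLeast0_atMost_Suc)

lemma sum7: "(\<Sum>i=0..(7::nat). f i) = f 0 + f 1 + f 2 + f 3 + f 4 + f 5 + f 6 + f 7"
  by (simp add: eval_nat_numeral sum.atLeast0_atMost_Suc)

lemma sum8: "(\<Sum>i=0..(8::nat). f i) = f 0 + f 1 + f 2 + f 3 + f 4 + f 5 + f 6 + f 7 + f 8"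
  by (simp add: eval_nat_numeral sum.atLeast0_atMost_Suc)

lemma sum9: "(\<Sum>i=0..(9::nat). f i) = f 0 + f 1 + f 2 + f 3 + f 4 + f 5 + f 6 + f 7 + f 8 + f 9"
  by (simp add: eval_nat_numeral sum.atLeast0_atMost_Suc)

lemma conc_3_6:
  fixes x :: real assumes xx: "x \<ge> (4::real)"
  shows "real 6 * S0 6 3 x < (x+1) * S1 6 3 x"
proof -
  have e: "real 6 * S0 6 3 x - (x+1) * S1 6 3 x = (60::real) * x^0 + (120::real) * x^1 + (-12::real) * x^3"
    unfolding S0_def S1_def sum3 w_def
    by (simp add: binomial_code fold_atLeastAtMost_nat.simps fact_numeral; algebra)
  define z where "z = x - (4::real)"
  have z: "0 \<le> z" using xx by (simp add: z_def)
  have e2: "(60::real) * x^0 + (120::real) * x^1 + (-12::real) * x^3 = - ((228::real) * z^0 + (456::real) * z^1 + (144::real) * z^2 + (12::real) * z^3)"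
    unfolding z_def by algebra
  have "0 < (228::real) * z^0 + (456::real) * z^1 + (144::real) * z^2 + (12::real) * z^3"
    by (intro add_pos_nonneg mult_nonneg_nonneg zero_le_power; use z in simp)
  then show ?thesis using e e2 by linarith
qed

lemma conc_4_7:
  fixes x :: real assumes xx: "x \<ge> (13/4::real)"
  shows "real 7 * S0 7 4 x < (x+1) * S1 7 4 x"
proof -
  have e: "real 7 * S0 7 4 x - (x+1) * S1 7 4 x = (105::real) * x^0 + (420::real) * x^1 + (210::real) * x^2 + (-84::real) * x^3 + (-21::real) * x^4"
    unfolding S0_def S1_def sum4 w_def
    by (simp add: binomial_code fold_atLeastAtMost_nat.simps fact_numeral; algebra)
  define z where "z = x - (13/4::real)"
  have z: "0 \<le> z" using xx by (simp add: z_def)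
  have e2: "(105::real) * x^0 + (420::real) * x^1 + (210::real) * x^2 + (-84::real) * x^3 + (-21::real) * x^4 = - ((393813/256::real) * z^0 + (60165/16::real) * z^1 + (15519/8::real) * z^2 + (357::real) * z^3 + (21::real) * z^4)"
    unfolding z_def by algebra
  have "0 < (393813/256::real) * z^0 + (60165/16::real) * z^1 + (15519/8::real) * z^2 + (357::real) * z^3 + (21::real) * z^4"
    by (intro add_pos_nonneg mult_nonneg_nonneg zero_le_power; use z in simp)
  then show ?thesis using e e2 by linarith
qed

lemma conc_4_8:
  fixes x :: real assumes xx: "x \<ge> (4::real)"
  shows "real 8 * S0 8 4 x < (x+1) * S1 8 4 x"
proof -
  have e: "real 8 * S0 8 4 x - (x+1) * S1 8 4 x = (280::real) * x^0 + (840::real) * x^1 + (336::real) * x^2 + (-112::real) * x^3 + (-24::real) * x^4"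
    unfolding S0_def S1_def sum4 w_def
    by (simp add: binomial_code fold_atLeastAtMost_nat.simps fact_numeral; algebra)
  define z where "z = x - (4::real)"
  have z: "0 \<le> z" using xx by (simp add: z_def)
  have e2: "(280::real) * x^0 + (840::real) * x^1 + (336::real) * x^2 + (-112::real) * x^3 + (-24::real) * x^4 = - ((4296::real) * z^0 + (7992::real) * z^1 + (3312::real) * z^2 + (496::real) * z^3 + (24::real) * z^4)"
    unfolding z_def by algebra
  have "0 < (4296::real) * z^0 + (7992::real) * z^1 + (3312::real) * z^2 + (496::real) * z^3 + (24::real) * z^4"
    by (intro add_pos_nonneg mult_nonneg_nonneg zero_le_power; use z in simp)
  then show ?thesis using e e2 by linarith
qed

lemma conc_5_8:
  fixes x :: real assumes xx: "x \<ge> (14/5::real)"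
  shows "real 8 * S0 8 5 x < (x+1) * S1 8 5 x"
proof -
  have e: "real 8 * S0 8 5 x - (x+1) * S1 8 5 x = (168::real) * x^0 + (1120::real) * x^1 + (1400::real) * x^2 + (-280::real) * x^4 + (-32::real) * x^5"
    unfolding S0_def S1_def sum5 w_def
    by (simp add: binomial_code fold_atLeastAtMost_nat.simps fact_numeral; algebra)
  define z where "z = x - (14/5::real)"
  have z: "0 \<le> z" using xx by (simp add: z_def)
  have e2: "(168::real) * x^0 + (1120::real) * x^1 + (1400::real) * x^2 + (-280::real) * x^4 + (-32::real) * x^5 = - ((26367768/3125::real) * z^0 + (3182592/125::real) * z^1 + (469896/25::real) * z^2 + (28224/5::real) * z^3 + (728::real) * z^4 + (32::real) * z^5)"
    unfolding z_def by algebra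
  have "0 < (26367768/3125::real) * z^0 + (3182592/125::real) * z^1 + (469896/25::real) * z^2 + (28224/5::real) * z^3 + (728::real) * z^4 + (32::real) * z^5"
    by (intro add_pos_nonneg mult_nonneg_nonneg zero_le_power; use z in simp)
  then show ?thesis using e e2 by linarith
qed

lemma conc_5_9:
  fixes x :: real assumes xx: "x \<ge> (17/5::real)"
  shows "real 9 * S0 9 5 x < (x+1) * S1 9 5 x"
proof -
  have e: "real 9 * S0 9 5 x - (x+1) * S1 9 5 x = (504::real) * x^0 + (2520::real) * x^1 + (2520::real) * x^2 + (-360::real) * x^4 + (-36::real) * x^5"
    unfolding S0_def S1_def sum5 w_def
    by (simp add: binomial_code fold_atLeastAtMost_nat.simps fact_numeral; algebra)
  define z where "z = x - (17/5::real)"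
  have z: "0 \<le> z" using xx by (simp add: z_def)
  have e2: "(504::real) * x^0 + (2520::real) * x^1 + (2520::real) * x^2 + (-360::real) * x^4 + (-36::real) * x^5 = - ((82067652/3125::real) * z^0 + (7624476/125::real) * z^1 + (914976/25::real) * z^2 + (45288/5::real) * z^3 + (972::real) * z^4 + (36::real) * z^5)"
    unfolding z_def by algebra
  have "0 < (82067652/3125::real) * z^0 + (7624476/125::real) * z^1 + (914976/25::real) * z^2 + (45288/5::real) * z^3 + (972::real) * z^4 + (36::real) * z^5"
    by (intro add_pos_nonneg mult_nonneg_nonneg zero_le_power; use z in simp)
  then show ?thesis using e e2 by linarith
qed

lemma conc_5_10:
  fixes x :: real assumes xx: "x \<ge> (4::real)"
  shows "real 10 * S0 10 5 x < (x+1) * S1 10 5 x"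
proof -
  have e: "real 10 * S0 10 5 x - (x+1) * S1 10 5 x = (1260::real) * x^0 + (5040::real) * x^1 + (4200::real) * x^2 + (-450::real) * x^4 + (-40::real) * x^5"
    unfolding S0_def S1_def sum5 w_def
    by (simp add: binomial_code fold_atLeastAtMost_nat.simps fact_numeral; algebra)
  define z where "z = x - (4::real)"
  have z: "0 \<le> z" using xx by (simp add: z_def)
  have e2: "(1260::real) * x^0 + (5040::real) * x^1 + (4200::real) * x^2 + (-450::real) * x^4 + (-40::real) * x^5 = - ((67540::real) * z^0 + (127760::real) * z^1 + (64600::real) * z^2 + (13600::real) * z^3 + (1250::real) * z^4 + (40::real) * z^5)"
    unfolding z_def by algebra
  have "0 < (67540::real) * z^0 + (127760::real) * z^1 + (64600::real) * z^2 + (13600::real) * z^3 + (1250::real) * z^4 + (40::real) * z^5"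
    by (intro add_pos_nonneg mult_nonneg_nonneg zero_le_power; use z in simp)
  then show ?thesis using e e2 by linarith
qed

lemma conc_6_9:
  fixes x :: real assumes xx: "x \<ge> (5/2::real)"
  shows "real 9 * S0 9 6 x < (x+1) * S1 9 6 x"
proof -
  have e: "real 9 * S0 9 6 x - (x+1) * S1 9 6 x = (252::real) * x^0 + (2520::real) * x^1 + (5670::real) * x^2 + (2520::real) * x^3 + (-1260::real) * x^4 + (-648::real) * x^5 + (-45::real) * x^6"
    unfolding S0_def S1_def sum6 w_def
    by (simp add: binomial_code fold_atLeastAtMost_nat.simps fact_numeral; algebra)
  define z where "z = x - (5/2::real)"
  have z: "0 \<le> z" using xx by (simp add: z_def)
  have e2: "(252::real) * x^0 + (2520::real) * x^1 + (5670::real) * x^2 + (2520::real) * x^3 + (-1260::real) * x^4 + (-648::real) * x^5 + (-45::real) * x^6 = - ((2695797/64::real) * z^0 + (2456955/16::real) * z^1 + (2404755/16::real) * z^2 + (129285/2::real) * z^3 + (54315/4::real) * z^4 + (1323::real) * z^5 + (45::real) * z^6)"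
    unfolding z_def by algebra
  have "0 < (2695797/64::real) * z^0 + (2456955/16::real) * z^1 + (2404755/16::real) * z^2 + (129285/2::real) * z^3 + (54315/4::real) * z^4 + (1323::real) * z^5 + (45::real) * z^6"
    by (intro add_pos_nonneg mult_nonneg_nonneg zero_le_power; use z in simp)
  then show ?thesis using e e2 by linarith
qed

lemma conc_6_10:
  fixes x :: real assumes xx: "x \<ge> (3::real)"
  shows "real 10 * S0 10 6 x < (x+1) * S1 10 6 x"
proof -
  have e: "real 10 * S0 10 6 x - (x+1) * S1 10 6 x = (840::real) * x^0 + (6300::real) * x^1 + (11340::real) * x^2 + (4200::real) * x^3 + (-1800::real) * x^4 + (-810::real) * x^5 + (-50::real) * x^6"
    unfolding S0_def S1_def sum6 w_def
    by (simp add: binomial_code fold_atLeastAtMost_nat.simps fact_numeral; algebra)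
  define z where "z = x - (3::real)"
  have z: "0 \<le> z" using xx by (simp add: z_def)
  have e2: "(840::real) * x^0 + (6300::real) * x^1 + (11340::real) * x^2 + (4200::real) * x^3 + (-1800::real) * x^4 + (-810::real) * x^5 + (-50::real) * x^6 = - ((143880::real) * z^0 + (407610::real) * z^1 + (327510::real) * z^2 + (117300::real) * z^3 + (20700::real) * z^4 + (1710::real) * z^5 + (50::real) * z^6)"
    unfolding z_def by algebra
  have "0 < (143880::real) * z^0 + (407610::real) * z^1 + (327510::real) * z^2 + (117300::real) * z^3 + (20700::real) * z^4 + (1710::real) * z^5 + (50::real) * z^6"
    by (intro add_pos_nonneg mult_nonneg_nonneg zero_le_power; use z in simp)
  then show ?thesis using e e2 by linarith
qed

lemma conc_7_10:
  fixes x :: real assumes xx: "x \<ge> (16/7::real)"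
  shows "real 10 * S0 10 7 x < (x+1) * S1 10 7 x"
proof -
  have e: "real 10 * S0 10 7 x - (x+1) * S1 10 7 x = (360::real) * x^0 + (5040::real) * x^1 + (17640::real) * x^2 + (17640::real) * x^3 + (-5040::real) * x^5 + (-1260::real) * x^6 + (-60::real) * x^7"
    unfolding S0_def S1_def sum7 w_def
    by (simp add: binomial_code fold_atLeastAtMost_nat.simps fact_numeral; algebra)
  define z where "z = x - (16/7::real)"
  have z: "0 \<le> z" using xx by (simp add: z_def)
  have e2: "(360::real) * x^0 + (5040::real) * x^1 + (17640::real) * x^2 + (17640::real) * x^3 + (-5040::real) * x^5 + (-1260::real) * x^6 + (-60::real) * x^7 = - ((163875578280/823543::real) * z^0 + (14407594800/16807::real) * z^1 + (2539664280/2401::real) * z^2 + (207146280/343::real) * z^3 + (8889600/49::real) * z^4 + (202320/7::real) * z^5 + (2220::real) * z^6 + (60::real) * z^7)"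
    unfolding z_def by algebra
  have "0 < (163875578280/823543::real) * z^0 + (14407594800/16807::real) * z^1 + (2539664280/2401::real) * z^2 + (207146280/343::real) * z^3 + (8889600/49::real) * z^4 + (202320/7::real) * z^5 + (2220::real) * z^6 + (60::real) * z^7"
    by (intro add_pos_nonneg mult_nonneg_nonneg zero_le_power; use z in simp)
  then show ?thesis using e e2 by linarith
qed

lemma conc_8_11:
  fixes x :: real assumes xx: "x \<ge> (17/8::real)"
  shows "real 11 * S0 11 8 x < (x+1) * S1 11 8 x"
proof -
  have e: "real 11 * S0 11 8 x - (x+1) * S1 11 8 x = (495::real) * x^0 + (9240::real) * x^1 + (46200::real) * x^2 + (77616::real) * x^3 + (32340::real) * x^4 + (-18480::real) * x^5 + (-13860::real) * x^6 + (-2200::real) * x^7 + (-77::real) * x^8"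
    unfolding S0_def S1_def sum8 w_def
    by (simp add: binomial_code fold_atLeastAtMost_nat.simps fact_numeral; algebra)
  define z where "z = x - (17/8::real)"
  have z: "0 \<le> z" using xx by (simp add: z_def)
  have e2: "(495::real) * x^0 + (9240::real) * x^1 + (46200::real) * x^2 + (77616::real) * x^3 + (32340::real) * x^4 + (-18480::real) * x^5 + (-13860::real) * x^6 + (-2200::real) * x^7 + (-77::real) * x^8 = - ((15207694021773/16777216::real) * z^0 + (1186900894949/262144::real) * z^1 + (445364729579/65536::real) * z^2 + (20065684947/4096::real) * z^3 + (3996844775/2048::real) * z^4 + (28492387/64::real) * z^5 + (901131/16::real) * z^6 + (3509::real) * z^7 + (77::real) * z^8)"
    unfolding z_def by algebra
  have "0 < (15207694021773/16777216::real) * z^0 + (1186900894949/262144::real) * z^1 + (445364729579/65536::real) * z^2 + (20065684947/4096::real) * z^3 + (3996844775/2048::real) * z^4 + (28492387/64::real) * z^5 + (901131/16::real) * z^6 + (3509::real) * z^7 + (77::real) * z^8"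
    by (intro add_pos_nonneg mult_nonneg_nonneg zero_le_power; use z in simp)
  then show ?thesis using e e2 by linarith
qed

lemma conc_9_12:
  fixes x :: real assumes xx: "x \<ge> (2::real)"
  shows "real 12 * S0 12 9 x < (x+1) * S1 12 9 x"
proof -
  have e: "real 12 * S0 12 9 x - (x+1) * S1 12 9 x = (660::real) * x^0 + (15840::real) * x^1 + (106920::real) * x^2 + (266112::real) * x^3 + (232848::real) * x^4 + (-83160::real) * x^6 + (-31680::real) * x^7 + (-3564::real) * x^8 + (-96::real) * x^9"
    unfolding S0_def S1_def sum9 w_def
    by (simp add: binomial_code fold_atLeastAtMost_nat.simps fact_numeral; algebra)
  define z where "z = x - (2::real)"
  have z: "0 \<le> z" using xx by (simp add: z_def)
  have e2: "(660::real) * x^0 + (15840::real) * x^1 + (106920::real) * x^2 + (266112::real) * x^3 + (232848::real) * x^4 + (-83160::real) * x^6 + (-31680::real) * x^7 + (-3564::real) * x^8 + (-96::real) * x^9 = - ((4024332::real) * z^0 + (22942080::real) * z^1 + (40784472::real) * z^2 + (35820288::real) * z^3 + (18005904::real) * z^4 + (5449248::real) * z^5 + (990360::real) * z^6 + (102528::real) * z^7 + (5292::real) * z^8 + (96::real) * z^9)"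
    unfolding z_def by algebra
  have "0 < (4024332::real) * z^0 + (22942080::real) * z^1 + (40784472::real) * z^2 + (35820288::real) * z^3 + (18005904::real) * z^4 + (5449248::real) * z^5 + (990360::real) * z^6 + (102528::real) * z^7 + (5292::real) * z^8 + (96::real) * z^9"
    by (intro add_pos_nonneg mult_nonneg_nonneg zero_le_power; use z in simp)
  then show ?thesis using e e2 by linarith
qed

lemma cases_km:
  fixes m k :: nat
  assumes "3 \<le> m" "m + 3 \<le> k" "k \<le> 2 * m"
  shows "(m,k) \<in> {(3,6),(4,7),(4,8),(5,8),(5,9),(5,10),(6,9),(6,10),(7,10),(8,11),(9,12)}
         \<or> m * (m - 1) < k * (m - 3)"
proof (cases "10 \<le> m")
  case True
  then obtain n where n: "m = n + 10" by (metis add.commute le_add_diff_inverse)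
  have "(m + 3) * (m - 3) \<le> k * (m - 3)" using assms by (intro mult_right_mono) auto
  moreover have "m * (m - 1) < (m + 3) * (m - 3)" unfolding n by (simp add: algebra_simps)
  ultimately show ?thesis by linarith
next
  case False
  then consider "m = 3" | "m = 4" | "m = 5" | "m = 6" | "m = 7" | "m = 8" | "m = 9" using assms(1) by linarith
  then show ?thesis using assms by cases auto
qed

theorem lemma13:
  fixes d k :: nat and x :: real
  assumes "d \<ge> 9"
    and "real d / 2 + 1 < real k" and "real k \<le> 2 * real d / 3"
    and "x \<ge> (5 * real k - 2 * real d) / (real d - real k)"
  shows "(x + 1) * deriv (hyp_pgf d k) x < real k * hyp_pgf d k x"
proof -
  define m where "m = d - k"
  have h1: "real (d + 2) < real (2 * k)" using assms(2) by simp
  have h2: "real (3 * k) \<le> real (2 * d)" using assms(3) by simp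
  have dk1: "d + 2 < 2 * k" using h1 by (simp only: of_nat_less_iff)
  have dk2: "3 * k \<le> 2 * d" using h2 by (simp only: of_nat_le_iff)
  have kd: "k \<le> d" using dk2 by linarith
  have dm: "d = k + m" using kd by (simp add: m_def)
  have m3: "3 \<le> m" using dk1 dk2 assms(1) unfolding dm by presburger
  have mk3: "m + 3 \<le> k" using dk1 dk2 assms(1) unfolding dm by presburger
  have k2m: "k \<le> 2 * m" using dk1 dk2 assms(1) unfolding dm by presburger
  have rdm: "real d - real k = real m" using dm by simp
  have x0: "x \<ge> (3 * real k - 2 * real m) / real m"
    using assms(4) unfolding rdm by (simp add: dm)
  have mpos: "0 < real m" using m3 by simp
  have "0 < (3 * real k - 2 * real m) / real m"
  proof (rule divide_pos_pos)
    have "real m + 3 \<le> real k" using mk3 by simp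
    then show "0 < 3 * real k - 2 * real m" using mpos by linarith
  qed (rule mpos)
  then have x: "0 < x" using x0 by linarith
  have mk: "d - k < k" using mk3 m_def by linarith
  show ?thesis
  proof (rule reduce[OF kd mk x], unfold m_def[symmetric])
    from cases_km[OF m3 mk3 k2m] show "real k * S0 k m x < (x + 1) * S1 k m x"
    proof
      assume "(m,k) \<in> {(3,6),(4,7),(4,8),(5,8),(5,9),(5,10),(6,9),(6,10),(7,10),(8,11),(9,12)}"
      then show ?thesis using x0
        by (auto intro: conc_3_6 conc_4_7 conc_4_8 conc_5_8 conc_5_9 conc_5_10 conc_6_9 conc_6_10
            conc_7_10 conc_8_11 conc_9_12)
    next
      assume c: "m * (m - 1) < k * (m - 3)"
      have "real (m * (m - 1)) < real (k * (m - 3))" using c by (simp only: of_nat_less_iff)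
      then have c': "real m * (real m - 1) < real k * (real m - 3)"
        using m3 by (simp add: of_nat_diff)
      have "x + 1 \<ge> (3 * real k - real m) / real m"
        using x0 mpos by (simp add: field_simps)
      then have "(real m - 1) * (x + 1) \<ge> (real m - 1) * ((3 * real k - real m) / real m)"
        using m3 by (intro mult_left_mono) auto
      moreover have "(real m - 1) * ((3 * real k - real m) / real m) > 2 * real k"
      proof -
        have "(real m - 1) * (3 * real k - real m) > 2 * real k * real m"
          using c' by (simp add: algebra_simps)
        then show ?thesis using mpos by (simp add: field_simps)
      qed
      ultimately have cond: "2 * real k < (real m - 1) * (x + 1)" by linarith
      show ?thesis using jensen_case[OF m3 _ x cond] mk3 by simp
    qed
  qed
qed
end
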